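(* Let $\Omega\subset\mathbb R^n$ be open. For $u\in W^{s,G}_{\mathrm{loc}}(\Omega)\cap L^g_s(\mathbb R^n)$ and for $v\in W^{s,G}_{\mathrm{loc}}(\Omega)$ with compact support in $\Omega$, the quantity \[ \mathcal E(u,v)=\int_{\mathbb R^n}\int_{\mathbb R^n}g(|D^su|)\frac{D^su}{|D^su|}D^sv\,\frac{k(x,y)}{|x-y|^n}\,dy\,dx \] is finite.
   Context: Fix $n\in\mathbb N$, $s\in(0,1)$, $\Lambda\ge1$. $G(t)=\int_0^tg$ is a differentiable Young function with $g=G'$ strictly increasing, $G(1)=1$, and $1<p\le q$ with $pG(t)\le tg(t)\le qG(t)$ for $t\ge0$. $k:\mathbb R^n\times\mathbb R^n\to[0,\infty]$ measurable with $\Lambda^{-1}\le k(x,y)=k(y,x)\le\Lambda$ a.e. $D^su(x,y)=(u(x)-u(y))/|x-y|^s$. $W^{s,G}_{\mathrm{loc}}(\Omega)$: measurable $u$ with $\int_DG(|u|)dx+\int_D\int_DG(|D^su|)|x-y|^{-n}dydx<\infty$ for every open $D\Subset\Omega$ (a function with compact support in $\Omega$ is extended by zero to $\mathbb R^n$). $L^g_s(\mathbb R^n)$: measurable $u$ with $g(|u|)$ locally integrable and $\int g(|u(x)|/(1+|x|)^s)(1+|x|)^{-n-s}dx<\infty$. *)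

theory Defs
  imports "HOL-Analysis.Analysis"
begin

definition young_pq :: "(real \<Rightarrow> real) \<Rightarrow> (real \<Rightarrow> real) \<Rightarrow> real \<Rightarrow> real \<Rightarrow> bool" where
  "young_pq G g p q \<longleftrightarrow>
     1 < p \<and> p \<le> q \<and>
     (\<forall>t\<ge>0. G t = integral {0..t} g) \<and>
     (\<forall>t\<ge>0. (G has_real_derivative g t) (at t within {0..})) \<and>
     (\<forall>t\<ge>0. 0 \<le> g t) \<and>
     strict_mono_on {0..} g \<and>
     G 1 = 1 \<and>
     (\<forall>t\<ge>0. p * G t \<le> t * g t \<and> t * g t \<le> q * G t)"

definition Ds :: "real \<Rightarrow> ('a::euclidean_space \<Rightarrow> real) \<Rightarrow> 'a \<Rightarrow> 'a \<Rightarrow> real" where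
  "Ds s u x y = (u x - u y) / norm (x - y) powr s"

text \<open>W^{s,G}_loc(Omega) (functions defined on all of R^n; only values in Omega matter).\<close>
definition WsG_loc :: "real \<Rightarrow> (real \<Rightarrow> real) \<Rightarrow> 'a::euclidean_space set \<Rightarrow> ('a \<Rightarrow> real) set" where
  "WsG_loc s G \<Omega> = {u. u \<in> borel_measurable lebesgue \<and>
     (\<forall>D. open D \<and> compact (closure D) \<and> closure D \<subseteq> \<Omega> \<longrightarrow>
        (\<integral>\<^sup>+ x\<in>D. ennreal (G \<bar>u x\<bar>) \<partial>lebesgue) < \<infinity> \<and>
        (\<integral>\<^sup>+ z\<in>D \<times> D. ennreal (G \<bar>Ds s u (fst z) (snd z)\<bar> / norm (fst z - snd z) ^ DIM('a))
            \<partial>(lebesgue :: ('a \<times> 'a) measure)) < \<infinity>)}"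

definition Lgs :: "real \<Rightarrow> (real \<Rightarrow> real) \<Rightarrow> ('a::euclidean_space \<Rightarrow> real) set" where
  "Lgs s g = {u. u \<in> borel_measurable lebesgue \<and>
     (\<forall>K. compact K \<longrightarrow> set_integrable lebesgue K (\<lambda>x. g \<bar>u x\<bar>)) \<and>
     (\<integral>\<^sup>+ x. ennreal (g (\<bar>u x\<bar> / (1 + norm x) powr s) * (1 + norm x) powr (- real DIM('a) - s))
        \<partial>lebesgue) < \<infinity>}"

end

theory Submission
  imports Defs
begin

lemma AE_lebesgue_fst:
  assumes "AE x in (lebesgue::'a::euclidean_space measure). P x"
  shows "AE z in (lebesgue :: ('a \<times> 'b::euclidean_space) measure). P (fst z)"
proof -
  have "AE x in lborel. P x" using assms by (simp add: AE_completion_iff)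
  then obtain N where N: "N \<in> null_sets lborel" "{x. \<not> P x} \<subseteq> N"
  proof -
    from \<open>AE x in lborel. P x\<close> obtain N where "{x \<in> space lborel. \<not> P x} \<subseteq> N" "emeasure lborel N = 0" "N \<in> sets lborel"
      by (rule AE_E)
    then show ?thesis using that by (auto simp: null_sets_def)
  qed
  have "N \<times> (UNIV::'b set) \<in> null_sets (lborel \<Otimes>\<^sub>M (lborel::'b measure))"
    using N by (intro lborel.times_in_null_sets1) auto
  then have "N \<times> (UNIV::'b set) \<in> null_sets (lborel :: ('a \<times> 'b) measure)"
    by (simp add: lborel_prod)
  then have "AE z in (lborel :: ('a \<times> 'b) measure). P (fst z)"
    by (rule AE_I') (use N in auto)
  then show ?thesis by (rule AE_completion)
qed

lemma AE_lebesgue_snd: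
  assumes "AE x in (lebesgue::'b::euclidean_space measure). P x"
  shows "AE z in (lebesgue :: ('a::euclidean_space \<times> 'b) measure). P (snd z)"
proof -
  have "AE x in lborel. P x" using assms by (simp add: AE_completion_iff)
  then obtain N where N: "N \<in> null_sets lborel" "{x. \<not> P x} \<subseteq> N"
  proof -
    from \<open>AE x in lborel. P x\<close> obtain N where "{x \<in> space lborel. \<not> P x} \<subseteq> N" "emeasure lborel N = 0" "N \<in> sets lborel"
      by (rule AE_E)
    then show ?thesis using that by (auto simp: null_sets_def)
  qed
  have "(UNIV::'a set) \<times> N \<in> null_sets ((lborel::'a measure) \<Otimes>\<^sub>M lborel)"
    using N by (intro lborel.times_in_null_sets2) auto
  then have "(UNIV::'a set) \<times> N \<in> null_sets (lborel :: ('a \<times> 'b) measure)"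
    by (simp add: lborel_prod)
  then have "AE z in (lborel :: ('a \<times> 'b) measure). P (snd z)"
    by (rule AE_I') (use N in auto)
  then show ?thesis by (rule AE_completion)
qed

lemma meas_fst:
  fixes u :: "'a::euclidean_space \<Rightarrow> real"
  assumes "u \<in> borel_measurable lebesgue"
  shows "(\<lambda>z. u (fst z)) \<in> borel_measurable (lebesgue :: ('a \<times> 'b::euclidean_space) measure)"
proof -
  obtain u' where u': "u' \<in> borel_measurable lborel" "AE x in lborel. u x = u' x"
    using completion_ex_borel_measurable_real[OF assms] by auto
  have "(\<lambda>z. u' (fst z)) \<in> borel_measurable (lborel :: ('a \<times> 'b) measure)"
    using u'(1) unfolding lborel_prod[symmetric] by measurable
  then have m: "(\<lambda>z. u' (fst z)) \<in> borel_measurable (lebesgue :: ('a \<times> 'b) measure)"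
    by (rule measurable_completion)
  have "AE z in (lebesgue :: ('a \<times> 'b) measure). u' (fst z) = u (fst z)"
    by (rule AE_lebesgue_fst) (use u'(2) in \<open>auto simp: AE_completion_iff\<close>)
  then show ?thesis by (rule borel_measurable_AE[OF m])
qed

lemma meas_snd:
  fixes u :: "'b::euclidean_space \<Rightarrow> real"
  assumes "u \<in> borel_measurable lebesgue"
  shows "(\<lambda>z. u (snd z)) \<in> borel_measurable (lebesgue :: ('a::euclidean_space \<times> 'b) measure)"
proof -
  obtain u' where u': "u' \<in> borel_measurable lborel" "AE x in lborel. u x = u' x"
    using completion_ex_borel_measurable_real[OF assms] by auto
  have "(\<lambda>z. u' (snd z)) \<in> borel_measurable (lborel :: ('a \<times> 'b) measure)"
    using u'(1) unfolding lborel_prod[symmetric] by measurable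
  then have m: "(\<lambda>z. u' (snd z)) \<in> borel_measurable (lebesgue :: ('a \<times> 'b) measure)"
    by (rule measurable_completion)
  have "AE z in (lebesgue :: ('a \<times> 'b) measure). u' (snd z) = u (snd z)"
    by (rule AE_lebesgue_snd) (use u'(2) in \<open>auto simp: AE_completion_iff\<close>)
  then show ?thesis by (rule borel_measurable_AE[OF m])
qed

lemma nn_integral_prod_lebesgue:
  fixes F :: "'a::euclidean_space \<Rightarrow> ennreal" and H :: "'b::euclidean_space \<Rightarrow> ennreal"
  assumes F: "F \<in> borel_measurable lebesgue" and H: "H \<in> borel_measurable lebesgue"
  shows "(\<integral>\<^sup>+ z. F (fst z) * H (snd z) \<partial>(lebesgue :: ('a \<times> 'b) measure))
        = (\<integral>\<^sup>+ x. F x \<partial>lebesgue) * (\<integral>\<^sup>+ y. H y \<partial>lebesgue)"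
proof -
  obtain F' where F': "F' \<in> borel_measurable lborel" "AE x in lborel. F x = F' x"
    using completion_ex_borel_measurable[OF F] by auto
  obtain H' where H': "H' \<in> borel_measurable lborel" "AE x in lborel. H x = H' x"
    using completion_ex_borel_measurable[OF H] by auto
  have ae1: "AE z in (lebesgue :: ('a \<times> 'b) measure). F (fst z) = F' (fst z)"
    by (rule AE_lebesgue_fst) (use F'(2) in \<open>auto simp: AE_completion_iff\<close>)
  have ae2: "AE z in (lebesgue :: ('a \<times> 'b) measure). H (snd z) = H' (snd z)"
    by (rule AE_lebesgue_snd) (use H'(2) in \<open>auto simp: AE_completion_iff\<close>)
  have "(\<integral>\<^sup>+ z. F (fst z) * H (snd z) \<partial>(lebesgue :: ('a \<times> 'b) measure))
       = (\<integral>\<^sup>+ z. F' (fst z) * H' (snd z) \<partial>(lebesgue :: ('a \<times> 'b) measure))"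
    by (rule nn_integral_cong_AE) (use ae1 ae2 in auto)
  also have "\<dots> = (\<integral>\<^sup>+ z. F' (fst z) * H' (snd z) \<partial>(lborel \<Otimes>\<^sub>M lborel))"
    by (simp add: nn_integral_completion lborel_prod)
  also have "\<dots> = (\<integral>\<^sup>+ x. \<integral>\<^sup>+ y. F' x * H' y \<partial>lborel \<partial>lborel)"
    by (subst lborel.nn_integral_fst[symmetric]) (use F'(1) H'(1) in auto)
  also have "\<dots> = (\<integral>\<^sup>+ x. F' x * (\<integral>\<^sup>+ y. H' y \<partial>lborel) \<partial>lborel)"
    by (intro nn_integral_cong) (use H'(1) in \<open>simp add: nn_integral_cmult\<close>)
  also have "\<dots> = (\<integral>\<^sup>+ x. F' x \<partial>lborel) * (\<integral>\<^sup>+ y. H' y \<partial>lborel)"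
    by (rule nn_integral_multc) (use F'(1) in simp)
  also have "(\<integral>\<^sup>+ x. F' x \<partial>lborel) = (\<integral>\<^sup>+ x. F x \<partial>lebesgue)"
    by (simp add: nn_integral_completion) (rule nn_integral_cong_AE, use F'(2) in auto)
  also have "(\<integral>\<^sup>+ x. H' x \<partial>lborel) = (\<integral>\<^sup>+ x. H x \<partial>lebesgue)"
    by (simp add: nn_integral_completion) (rule nn_integral_cong_AE, use H'(2) in auto)
  finally show ?thesis .
qed

lemma tail_weight_finite:
  assumes s: "0 < s"
  shows "(\<integral>\<^sup>+ y. ennreal ((1 + norm y) powr (- real DIM('a) - s)) \<partial>(lebesgue :: 'a::euclidean_space measure)) < \<infinity>"
proof -
  define n where "n = real DIM('a)"
  define \<rho> where "\<rho> = (2::real) powr (- n - s)"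
  define B where "B = emeasure (lebesgue :: 'a measure) (ball 0 1)"
  have B: "B < \<infinity>" unfolding B_def using emeasure_lborel_ball_finite[of "0::'a" 1] by simp
  have \<rho>0: "0 \<le> \<rho>" unfolding \<rho>_def by simp
  have pt: "ennreal ((1 + norm y) powr (- n - s))
      \<le> (\<Sum>k. ennreal (\<rho> ^ k) * indicator (ball (0::'a) (2 ^ (k+1))) y)" for y :: 'a
  proof -
    have ex: "\<exists>k. norm y < 2 ^ (k+1)"
      using real_arch_pow[of 2 "norm y"] by (metis Suc_eq_plus1 less_trans lessI numeral_One numeral_less_iff one_less_numeral_iff power_strict_increasing_iff semiring_norm(76))
    define k where "k = (LEAST k. norm y < (2::real) ^ (k+1))"
    have k1: "norm y < 2 ^ (k+1)" unfolding k_def by (rule LeastI_ex[OF ex])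
    have k2: "2 ^ k \<le> 1 + norm y"
    proof (cases k)
      case 0 then show ?thesis by simp
    next
      case (Suc j)
      have "\<not> norm y < 2 ^ (j+1)"
        using not_less_Least[of j "\<lambda>k. norm y < (2::real) ^ (k+1)"] Suc unfolding k_def by auto
      then show ?thesis using Suc by simp
    qed
    have "(1 + norm y) powr (- n - s) \<le> (2 ^ k) powr (- n - s)"
      using k2 s unfolding n_def by (intro powr_mono2') auto
    also have "(2 ^ k) powr (- n - s) = \<rho> ^ k"
      unfolding \<rho>_def by (simp add: powr_realpow[symmetric] powr_powr mult.commute)
    finally have "ennreal ((1 + norm y) powr (- n - s)) \<le> ennreal (\<rho> ^ k) * indicator (ball (0::'a) (2 ^ (k+1))) y"
      using k1 by (simp add: ennreal_leI)
    also have "\<dots> \<le> (\<Sum>k. ennreal (\<rho> ^ k) * indicator (ball (0::'a) (2 ^ (k+1))) y)"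
    proof -
      define f where "f = (\<lambda>k. ennreal (\<rho> ^ k) * indicator (ball (0::'a) (2 ^ (k+1))) y)"
      have "sum f {k} \<le> suminf f" by (intro sum_le_suminf) auto
      then show ?thesis unfolding f_def by (simp only: sum.insert_if finite.emptyI empty_iff if_False sum.empty add_0_right)
    qed
    finally show ?thesis .
  qed
  have "(\<integral>\<^sup>+ y. ennreal ((1 + norm y) powr (- n - s)) \<partial>(lebesgue :: 'a measure))
      \<le> (\<integral>\<^sup>+ y. (\<Sum>k. ennreal (\<rho> ^ k) * indicator (ball (0::'a) (2 ^ (k+1))) y) \<partial>lebesgue)"
    by (intro nn_integral_mono pt)
  also have "\<dots> = (\<Sum>k. \<integral>\<^sup>+ y. ennreal (\<rho> ^ k) * indicator (ball (0::'a) (2 ^ (k+1))) y \<partial>lebesgue)"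
  proof -
    have m: "\<And>i. (\<lambda>y. ennreal (\<rho> ^ i) * indicator (ball (0::'a) (2 ^ (i+1))) y) \<in> borel_measurable lebesgue"
      by (intro borel_measurable_times_ennreal borel_measurable_const borel_measurable_indicator) auto
    show ?thesis using nn_integral_suminf[OF m] by simp
  qed
  also have "\<dots> = (\<Sum>k. ennreal (\<rho> ^ k) * (ennreal ((2 ^ (k+1)) ^ DIM('a)) * B))"
  proof -
    have sb: "ball (0::'a) r \<in> sets lebesgue" for r by simp
    have eq: "emeasure lebesgue (ball (0::'a) (2^(k+1))) = ennreal ((2 ^ (k+1)) ^ DIM('a)) * B" for k
      unfolding B_def by (rule emeasure_lebesgue_ball_conv_unit_ball) simp
    have "(\<integral>\<^sup>+ y. ennreal (\<rho> ^ k) * indicator (ball (0::'a) (2 ^ (k+1))) y \<partial>lebesgue)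
       = ennreal (\<rho> ^ k) * (ennreal ((2 ^ (k+1)) ^ DIM('a)) * B)" for k
      by (simp only: nn_integral_cmult_indicator[OF sb] eq)
    then show ?thesis by simp
  qed
  also have "\<dots> = (\<Sum>k. ennreal (2 ^ DIM('a) * (2 powr (- s)) ^ k)) * B"
  proof -
    have "ennreal (\<rho> ^ k) * (ennreal ((2 ^ (k+1)) ^ DIM('a)) * B) = ennreal (2 ^ DIM('a) * (2 powr (- s)) ^ k) * B" for k
    proof -
      have "\<rho> ^ k * (2 ^ (k+1)) ^ DIM('a) = 2 ^ DIM('a) * (\<rho> * 2 ^ DIM('a)) ^ k"
        by (simp add: power_mult_distrib power_add power_mult[symmetric] mult.commute mult.left_commute)
      also have "\<rho> * 2 ^ DIM('a) = 2 powr (- s)"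
        unfolding \<rho>_def n_def by (simp add: powr_realpow[symmetric] powr_add[symmetric])
      finally have "\<rho> ^ k * (2 ^ (k+1)) ^ DIM('a) = 2 ^ DIM('a) * (2 powr (- s)) ^ k" .
      moreover have "ennreal (\<rho> ^ k) * (ennreal ((2 ^ (k+1)) ^ DIM('a)) * B) = ennreal (\<rho> ^ k * (2 ^ (k+1)) ^ DIM('a)) * B"
        using \<rho>0 by (simp add: ennreal_mult mult.assoc del: power_Suc)
      ultimately show ?thesis by (simp only:)
    qed
    then have "(\<Sum>k. ennreal (\<rho> ^ k) * (ennreal ((2 ^ (k+1)) ^ DIM('a)) * B))
       = (\<Sum>k. B * ennreal (2 ^ DIM('a) * (2 powr (- s)) ^ k))"
      by (simp only: mult.commute[of _ B])
    also have "\<dots> = B * (\<Sum>k. ennreal (2 ^ DIM('a) * (2 powr (- s)) ^ k))"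
      by (rule ennreal_suminf_cmult)
    finally show ?thesis by (simp only: mult.commute[of B])
  qed
  also have "\<dots> < \<infinity>"
  proof -
    have "summable (\<lambda>k. 2 ^ DIM('a) * ((2::real) powr (- s)) ^ k)"
    proof -
      have "(2::real) powr (- s) < 2 powr 0" using s by (intro powr_less_mono) auto
      then show ?thesis by (intro summable_mult summable_geometric) auto
    qed
    then have "(\<Sum>k. ennreal (2 ^ DIM('a) * (2 powr (- s)) ^ k)) \<noteq> top"
      by (intro ennreal_suminf_neq_top) auto
    then show ?thesis using B by (simp add: ennreal_mult_less_top top.not_eq_extremum)
  qed
  finally show ?thesis unfolding n_def .
qed

context
  fixes G g :: "real \<Rightarrow> real" and p q :: real
  assumes Y: "young_pq G g p q"
begin

lemma Y_p: "1 < p" and Y_pq: "p \<le> q" and Y_gnn: "t \<ge> 0 \<Longrightarrow> 0 \<le> g t"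
  and Y_mono: "strict_mono_on {0..} g" and Y_G1: "G 1 = 1"
  and Y_low: "t \<ge> 0 \<Longrightarrow> p * G t \<le> t * g t" and Y_up: "t \<ge> 0 \<Longrightarrow> t * g t \<le> q * G t"
  and Y_der: "t \<ge> 0 \<Longrightarrow> (G has_real_derivative g t) (at t within {0..})"
  and Y_int: "t \<ge> 0 \<Longrightarrow> G t = integral {0..t} g"
  using Y unfolding young_pq_def by auto

lemma Y_Gnn: "t \<ge> 0 \<Longrightarrow> 0 \<le> G t"
proof -
  assume t: "t \<ge> 0"
  have "0 \<le> t * g t" using Y_gnn[OF t] t by simp
  also have "\<dots> \<le> q * G t" by (rule Y_up[OF t])
  finally show ?thesis using Y_p Y_pq by (simp add: zero_le_mult_iff)
qed

lemma Y_G_le: "t \<ge> 0 \<Longrightarrow> G t \<le> t * g t"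
proof -
  assume t: "t \<ge> 0"
  have "G t \<le> p * G t" using Y_Gnn[OF t] Y_p by (simp add: mult_le_cancel_right1)
  then show ?thesis using Y_low[OF t] by linarith
qed

lemma Y_gmono: "0 \<le> a \<Longrightarrow> a \<le> b \<Longrightarrow> g a \<le> g b"
proof -
  assume a: "0 \<le> a" "a \<le> b"
  show ?thesis
  proof (cases "a = b")
    case False
    then have "g a < g b" using a by (intro strict_mono_onD[OF Y_mono]) auto
    then show ?thesis by simp
  qed simp
qed

lemma Y_young: assumes "0 \<le> a" "0 \<le> b" shows "g a * b \<le> q * (G a + G b)"
proof (cases "b \<le> a")
  case True
  have "g a * b \<le> g a * a" using True Y_gnn[OF assms(1)] by (simp add: mult_left_mono)
  also have "\<dots> \<le> q * G a" using Y_up[OF assms(1)] by (simp add: mult.commute)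
  also have "\<dots> \<le> q * (G a + G b)" using Y_Gnn[OF assms(2)] Y_p Y_pq by simp
  finally show ?thesis .
next
  case False
  have "g a * b \<le> g b * b" using False Y_gmono[OF assms(1)] assms by (simp add: mult_right_mono)
  also have "\<dots> \<le> q * G b" using Y_up[OF assms(2)] by (simp add: mult.commute)
  also have "\<dots> \<le> q * (G a + G b)" using Y_Gnn[OF assms(1)] Y_p Y_pq by simp
  finally show ?thesis .
qed

lemma Y_G0: "G 0 = 0"
proof -
  have "G 0 = integral {0..0} g" by (rule Y_int) simp
  also have "\<dots> = 0" by simp
  finally show ?thesis .
qed

lemma Y_deriv_at: "t > 0 \<Longrightarrow> (G has_real_derivative g t) (at t)"
proof -
  assume t: "t > 0"
  have "(G has_real_derivative g t) (at t within {0<..})"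
    by (rule DERIV_subset[OF Y_der[OF less_imp_le[OF t]]]) auto
  moreover have "at t within {0<..} = at t" by (rule at_within_open) (use t in auto)
  ultimately show ?thesis by (simp only:)
qed

lemma Y_Gdouble: assumes "1 \<le> l" "0 \<le> t" shows "G (l * t) \<le> l powr q * G t"
proof (cases "t = 0")
  case True then show ?thesis by (simp add: Y_G0)
next
  case False
  then have t: "t > 0" using assms by simp
  define \<phi> where "\<phi> x = G x * x powr (- q)" for x
  have "\<phi> t \<ge> \<phi> (l * t)"
  proof (rule DERIV_nonpos_imp_nonincreasing[of t "l * t" \<phi>])
    show "t \<le> l * t" using assms t by simp
    fix x assume x: "t \<le> x" "x \<le> l * t"
    then have x0: "x > 0" using t by simp
    have d: "(\<phi> has_real_derivative g x * x powr (- q) + G x * (- q * x powr (- q - 1))) (at x)"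
      unfolding \<phi>_def using x0
      by (auto intro!: derivative_eq_intros Y_deriv_at)
    have "g x * x powr (- q) + G x * (- q * x powr (- q - 1)) = x powr (- q - 1) * (x * g x - q * G x)"
      using x0 by (simp add: powr_add[symmetric] algebra_simps powr_diff)
    also have "\<dots> \<le> 0" using Y_up[of x] x0 by (simp add: mult_nonneg_nonpos)
    finally show "\<exists>y. (\<phi> has_real_derivative y) (at x) \<and> y \<le> 0" using d by blast
  qed
  then have "G (l * t) * (l * t) powr (- q) \<le> G t * t powr (- q)" unfolding \<phi>_def .
  moreover have e1: "(l * t) powr (- q) * (l * t) powr q = 1" using t assms
    by (simp add: powr_add[symmetric])
  moreover have e2: "t powr (- q) * (l * t) powr q = l powr q" using t assms
    by (simp add: powr_mult powr_add[symmetric] algebra_simps)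
  ultimately have "G (l * t) = (G (l * t) * (l * t) powr (- q)) * (l * t) powr q"
    by (simp add: mult.assoc)
  also have "\<dots> \<le> (G t * t powr (- q)) * (l * t) powr q"
    by (rule mult_right_mono) (use \<open>G (l * t) * (l * t) powr (- q) \<le> G t * t powr (- q)\<close> in auto)
  also have "\<dots> = l powr q * G t" using e2 by (simp add: mult.assoc mult.commute)
  finally show ?thesis .
qed

lemma Y_gdouble: assumes "1 \<le> l" "0 \<le> t" shows "g (l * t) \<le> (q / p) * l powr (q - 1) * g t"
proof (cases "t = 0")
  case True
  have "1 \<le> q / p" using Y_p Y_pq by simp
  moreover have "1 \<le> l powr (q - 1)" using assms Y_p Y_pq by (intro ge_one_powr_ge_zero) auto
  ultimately have "1 \<le> (q / p) * l powr (q - 1)" using mult_mono[of 1 "q/p" 1 "l powr (q-1)"] by simp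
  then have "1 * g 0 \<le> ((q / p) * l powr (q - 1)) * g 0"
    using Y_gnn[of 0] by (intro mult_right_mono) auto
  then show ?thesis using True by simp
next
  case False
  then have t: "t > 0" using assms by simp
  have lt: "l * t > 0" using t assms by simp
  have "(l * t) * g (l * t) \<le> q * G (l * t)" using Y_up[of "l*t"] lt by simp
  also have "\<dots> \<le> q * (l powr q * G t)" using Y_Gdouble[OF assms] Y_p Y_pq by simp
  also have "\<dots> \<le> q * (l powr q * (t * g t / p))"
  proof -
    have "G t \<le> t * g t / p" using Y_low[of t] t Y_p by (simp add: pos_le_divide_eq mult.commute)
    then show ?thesis using Y_p Y_pq by (intro mult_left_mono) auto
  qed
  finally have "(l * t) * g (l * t) \<le> q * (l powr q * (t * g t / p))" .
  also have "q * (l powr q * (t * g t / p)) = (l * t) * ((q / p) * (l powr q / l) * g t)"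
  proof -
    have "l \<noteq> 0" "p \<noteq> 0" using assms Y_p by auto
    then show ?thesis by (simp add: field_simps)
  qed
  finally have "g (l * t) \<le> (q / p) * (l powr q / l) * g t"
    using lt by (simp only: mult_le_cancel_left_pos)
  also have "l powr q / l = l powr (q - 1)" using assms by (simp add: powr_diff)
  finally show ?thesis .
qed

lemma Y_g1: "0 < g 1"
proof -
  have "g 0 < g 1" by (intro strict_mono_onD[OF Y_mono]) auto
  then show ?thesis using Y_gnn[of 0] by simp
qed

lemma Y_lin: assumes "0 \<le> b" shows "b \<le> q * (1 + G b) / g 1"
proof -
  have "g 1 * b \<le> q * (1 + G b)" using Y_young[of 1 b] assms Y_G1 by simp
  then have "b * g 1 \<le> q * (1 + G b)" by (simp only: mult.commute)
  then show ?thesis using Y_g1 by (simp only: pos_le_divide_eq)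
qed

lemma Y_Gmono: assumes "0 \<le> a" "a \<le> b" shows "G a \<le> G b"
proof (cases "a = 0")
  case True then show ?thesis using Y_G0 Y_Gnn assms by simp
next
  case False
  then have "a > 0" using assms by simp
  show ?thesis
  proof (rule DERIV_nonneg_imp_nondecreasing[OF assms(2)])
    fix x assume "a \<le> x" "x \<le> b"
    then have "x > 0" using \<open>a > 0\<close> by simp
    then show "\<exists>y. (G has_real_derivative y) (at x) \<and> 0 \<le> y"
      using Y_deriv_at[of x] Y_gnn[of x] by auto
  qed
qed

lemma Y_meas_g: "(\<lambda>x. g (max 0 x)) \<in> borel_measurable borel"
  by (rule borel_measurable_mono) (auto simp: mono_def intro!: Y_gmono)

lemma Y_meas_G: "(\<lambda>x. G (max 0 x)) \<in> borel_measurable borel"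
  by (rule borel_measurable_mono) (auto simp: mono_def intro!: Y_Gmono)

end

lemma g_sum:
  assumes Y: "young_pq G g p q" and "0 \<le> t" "0 \<le> a" "0 \<le> b" "t \<le> a + b"
  shows "g t \<le> g (2 * a) + g (2 * b)"
proof (cases "a \<le> b")
  case True
  then have "g t \<le> g (2 * b)" using assms by (intro Y_gmono[OF Y]) auto
  then show ?thesis using Y_gnn[OF Y, of "2*a"] assms by simp
next
  case False
  then have "g t \<le> g (2 * a)" using assms by (intro Y_gmono[OF Y]) auto
  then show ?thesis using Y_gnn[OF Y, of "2*b"] assms by simp
qed

lemma one_sided:
  fixes x y :: "'a::euclidean_space" and u v :: "'a \<Rightarrow> real"
  assumes Y: "young_pq G g p q" and s: "0 < s" and \<delta>: "0 < \<delta>" and c: "0 < c"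
    and r1: "\<delta> \<le> dist x y" and r2: "c * (1 + norm y) \<le> dist x y"
    and l1: "2 / \<delta> powr s \<le> l1" "1 \<le> l1" and l2: "2 / c powr s \<le> l2" "1 \<le> l2"
    and vy: "v y = 0"
  shows "g \<bar>Ds s u x y\<bar> * \<bar>Ds s v x y\<bar> / norm (x - y) ^ DIM('a)
     \<le> c powr (- real DIM('a) - s) *
        ((g (l1 * \<bar>u x\<bar>) * \<bar>v x\<bar> + (q / p) * l2 powr (q - 1) * \<bar>v x\<bar>) *
         ((1 + norm y) powr (- real DIM('a) - s)
          + g (\<bar>u y\<bar> / (1 + norm y) powr s) * (1 + norm y) powr (- real DIM('a) - s)))"
proof -
  define r where "r = dist x y"
  define n where "n = real DIM('a)"
  define e where "e = - n - s"
  define W where "W = (1 + norm y) powr e"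
  define \<tau> where "\<tau> = \<bar>u y\<bar> / (1 + norm y) powr s"
  define C2 where "C2 = (q / p) * l2 powr (q - 1)"
  have r0: "0 < r" using r1 \<delta> unfolding r_def by linarith
  have nr: "norm (x - y) = r" unfolding r_def by (simp add: dist_norm)
  have rs: "0 < r powr s" using r0 by simp
  have ny: "0 < 1 + norm y" by (smt (verit) norm_ge_zero)
  have W0: "0 \<le> W" unfolding W_def by simp
  have \<tau>0: "0 \<le> \<tau>" unfolding \<tau>_def by simp
  have Dv: "\<bar>Ds s v x y\<bar> = \<bar>v x\<bar> / r powr s" unfolding Ds_def nr using vy by simp
  have Du: "\<bar>Ds s u x y\<bar> = \<bar>u x - u y\<bar> / r powr s" unfolding Ds_def nr by simp
  have "g \<bar>Ds s u x y\<bar> \<le> g (2 * (\<bar>u x\<bar> / r powr s)) + g (2 * (\<bar>u y\<bar> / r powr s))"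
    unfolding Du using rs by (intro g_sum[OF Y]) (auto simp: add_divide_distrib[symmetric] intro!: divide_right_mono)
  also have "g (2 * (\<bar>u x\<bar> / r powr s)) \<le> g (l1 * \<bar>u x\<bar>)"
  proof (rule Y_gmono[OF Y])
    have "\<delta> powr s \<le> r powr s" using r1 \<delta> s unfolding r_def by (intro powr_mono2) auto
    then have "2 / r powr s \<le> 2 / \<delta> powr s" using \<delta> rs by (intro divide_left_mono) auto
    then have "2 / r powr s \<le> l1" using l1 by simp
    then show "2 * (\<bar>u x\<bar> / r powr s) \<le> l1 * \<bar>u x\<bar>"
      using mult_right_mono[of "2 / r powr s" l1 "\<bar>u x\<bar>"] by simp
  qed (use rs in auto)
  also have "g (2 * (\<bar>u y\<bar> / r powr s)) \<le> C2 * g \<tau>"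
  proof -
    have "(c * (1 + norm y)) powr s \<le> r powr s" using r2 c ny s unfolding r_def by (intro powr_mono2) auto
    then have "c powr s * (1 + norm y) powr s \<le> r powr s" using c ny by (simp add: powr_mult)
    then have "2 / r powr s \<le> 2 / (c powr s * (1 + norm y) powr s)"
      using c ny rs by (intro divide_left_mono) auto
    also have "\<dots> = (2 / c powr s) / (1 + norm y) powr s" by simp
    also have "\<dots> \<le> l2 / (1 + norm y) powr s" using l2 ny by (intro divide_right_mono) auto
    finally have "2 / r powr s \<le> l2 / (1 + norm y) powr s" .
    then have "2 / r powr s * \<bar>u y\<bar> \<le> l2 / (1 + norm y) powr s * \<bar>u y\<bar>"
      by (rule mult_right_mono) simp
    then have "g (2 * (\<bar>u y\<bar> / r powr s)) \<le> g (l2 * \<tau>)"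
      unfolding \<tau>_def using rs by (intro Y_gmono[OF Y]) auto
    also have "\<dots> \<le> C2 * g \<tau>" unfolding C2_def using Y_gdouble[OF Y l2(2) \<tau>0] .
    finally show ?thesis .
  qed
  finally have gb: "g \<bar>Ds s u x y\<bar> \<le> g (l1 * \<bar>u x\<bar>) + C2 * g \<tau>" by simp
  have wr: "\<bar>Ds s v x y\<bar> / norm (x - y) ^ DIM('a) = \<bar>v x\<bar> * r powr e"
  proof -
    have "norm (x - y) ^ DIM('a) = r powr n" unfolding nr n_def using r0 by (simp add: powr_realpow)
    then have "\<bar>Ds s v x y\<bar> / norm (x - y) ^ DIM('a) = \<bar>v x\<bar> / (r powr s * r powr n)"
      unfolding Dv by simp
    also have "r powr s * r powr n = r powr (- e)" unfolding e_def by (simp add: powr_add[symmetric])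
    also have "\<bar>v x\<bar> / r powr (- e) = \<bar>v x\<bar> * r powr e" by (simp add: powr_minus divide_inverse)
    finally show ?thesis .
  qed
  have re: "r powr e \<le> c powr e * W"
  proof -
    have "r powr e \<le> (c * (1 + norm y)) powr e"
      using r2 c ny s unfolding r_def e_def n_def by (intro powr_mono2') auto
    also have "\<dots> = c powr e * W" unfolding W_def using c ny by (simp add: powr_mult)
    finally show ?thesis .
  qed
  have gnn1: "0 \<le> g (l1 * \<bar>u x\<bar>)" using Y_gnn[OF Y] l1 by simp
  have gnn2: "0 \<le> g \<tau>" using Y_gnn[OF Y \<tau>0] .
  have C20: "0 \<le> C2" unfolding C2_def using Y_p[OF Y] Y_pq[OF Y] by simp
  have "g \<bar>Ds s u x y\<bar> * \<bar>Ds s v x y\<bar> / norm (x - y) ^ DIM('a)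
      = g \<bar>Ds s u x y\<bar> * (\<bar>v x\<bar> * r powr e)" using wr by (simp only: times_divide_eq_right[symmetric])
  also have "\<dots> \<le> (g (l1 * \<bar>u x\<bar>) + C2 * g \<tau>) * (\<bar>v x\<bar> * (c powr e * W))"
    using gb re gnn1 gnn2 C20 by (intro mult_mono) (auto simp: Y_gnn[OF Y] mult_left_mono)
  also have "\<dots> = c powr e * (g (l1 * \<bar>u x\<bar>) * \<bar>v x\<bar> * W + C2 * \<bar>v x\<bar> * (g \<tau> * W))"
    by (simp add: algebra_simps)
  also have "\<dots> \<le> c powr e * ((g (l1 * \<bar>u x\<bar>) * \<bar>v x\<bar> + C2 * \<bar>v x\<bar>) * (W + g \<tau> * W))"
    using gnn1 gnn2 C20 W0 by (intro mult_left_mono) (auto simp: algebra_simps)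
  finally show ?thesis unfolding e_def n_def W_def \<tau>_def C2_def .
qed

lemma geom_setup:
  fixes K \<Omega> :: "'a::euclidean_space set"
  assumes K: "compact K" "K \<subseteq> \<Omega>" "K \<noteq> {}" and \<Omega>: "open \<Omega>"
  obtains D \<delta> R where "open D" "compact (closure D)" "closure D \<subseteq> \<Omega>" "K \<subseteq> D" "bounded D"
    "0 < \<delta>" "0 \<le> R" "\<And>x. x \<in> K \<Longrightarrow> norm x \<le> R"
    "\<And>x y. x \<in> K \<Longrightarrow> y \<notin> D \<Longrightarrow> \<delta> \<le> dist x y"
proof -
  have "closed (- \<Omega>)" using \<Omega> by (simp add: closed_Compl)
  moreover have "K \<inter> - \<Omega> = {}" using K by auto
  ultimately obtain d where d: "d > 0" "\<And>x y. x \<in> K \<Longrightarrow> y \<in> - \<Omega> \<Longrightarrow> d \<le> dist x y"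
    using separate_compact_closed[OF K(1)] by metis
  define \<delta> where "\<delta> = d / 2"
  have \<delta>: "0 < \<delta>" using d by (simp add: \<delta>_def)
  obtain R where R: "R > 0" "\<And>x. x \<in> K \<Longrightarrow> norm x \<le> R"
    using compact_imp_bounded[OF K(1)] unfolding bounded_pos by auto
  define D where "D = {y. infdist y K < \<delta>}"
  have oD: "open D" unfolding D_def
    by (intro open_Collect_less continuous_intros)
  have KD: "K \<subseteq> D" unfolding D_def using \<delta> by auto
  have cl: "closure D \<subseteq> {y. infdist y K \<le> \<delta>}"
    by (rule closure_minimal) (auto simp: D_def intro!: closed_Collect_le continuous_intros)
  have sub: "{y. infdist y K \<le> \<delta>} \<subseteq> \<Omega> \<inter> cball 0 (R + \<delta>)"
  proof
    fix y assume y: "y \<in> {y. infdist y K \<le> \<delta>}"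
    obtain x where x: "x \<in> K" "infdist y K = dist y x"
      using infdist_attains_inf[OF compact_imp_closed[OF K(1)] K(3)] by metis
    have dx: "dist y x \<le> \<delta>" using x y by simp
    have "y \<in> \<Omega>"
    proof (rule ccontr)
      assume "y \<notin> \<Omega>"
      then have "d \<le> dist x y" using d(2)[OF x(1)] by auto
      then show False using dx d by (simp add: \<delta>_def dist_commute)
    qed
    moreover have "norm y \<le> R + \<delta>"
    proof -
      have "norm y \<le> norm x + dist y x" by (metis dist_norm norm_triangle_sub add.commute)
      then show ?thesis using R(2)[OF x(1)] dx by simp
    qed
    ultimately show "y \<in> \<Omega> \<inter> cball 0 (R + \<delta>)" by simp
  qed
  have bD: "bounded D" using cl sub closure_subset by (meson bounded_cball bounded_subset le_inf_iff order_trans)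
  have cD: "compact (closure D)" using bD by (simp add: compact_closure)
  have sD: "closure D \<subseteq> \<Omega>" using cl sub by blast
  have far: "\<delta> \<le> dist x y" if "x \<in> K" "y \<notin> D" for x y
  proof -
    have "\<delta> \<le> infdist y K" using that by (simp add: D_def)
    also have "\<dots> \<le> dist y x" by (rule infdist_le[OF that(1)])
    finally show ?thesis by (simp add: dist_commute)
  qed
  show ?thesis using that[OF oD cD sD KD bD \<delta> _ R(2) far] R(1) by simp
qed

lemma fst_leb[measurable]: "fst \<in> borel_measurable (lebesgue :: ('a::euclidean_space \<times> 'b::euclidean_space) measure)"
  by (rule measurable_completion) (simp add: borel_measurable_continuous_onI continuous_on_fst continuous_on_id)
lemma snd_leb[measurable]: "snd \<in> borel_measurable (lebesgue :: ('a::euclidean_space \<times> 'b::euclidean_space) measure)"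
  by (rule measurable_completion) (simp add: borel_measurable_continuous_onI continuous_on_snd continuous_on_id)


lemma id_leb[measurable]: "(\<lambda>x. x) \<in> borel_measurable (lebesgue :: 'a::euclidean_space measure)"
  by (rule measurable_completion) (simp add: borel_measurable_continuous_onI continuous_on_id)

lemma g_abs_meas:
  assumes Y: "young_pq G g p q" and f: "(f::'b \<Rightarrow> real) \<in> borel_measurable M"
  shows "(\<lambda>z. g \<bar>f z\<bar>) \<in> borel_measurable M"
proof -
  have "(\<lambda>z. g (max 0 \<bar>f z\<bar>)) \<in> borel_measurable M"
    using measurable_compose[OF _ Y_meas_g[OF Y]] f by measurable
  then show ?thesis by simp
qed

lemma G_abs_meas:
  assumes Y: "young_pq G g p q" and f: "(f::'b \<Rightarrow> real) \<in> borel_measurable M"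
  shows "(\<lambda>z. G \<bar>f z\<bar>) \<in> borel_measurable M"
proof -
  have "(\<lambda>z. G (max 0 \<bar>f z\<bar>)) \<in> borel_measurable M"
    using measurable_compose[OF _ Y_meas_G[OF Y]] f by measurable
  then show ?thesis by simp
qed

lemma Ds_meas:
  assumes um: "(u::'a::euclidean_space \<Rightarrow> real) \<in> borel_measurable lebesgue"
  shows "(\<lambda>z::'a\<times>'a. Ds s u (fst z) (snd z)) \<in> borel_measurable lebesgue"
proof -
  note [measurable] = meas_fst[OF um] meas_snd[OF um]
  show ?thesis unfolding Ds_def by measurable
qed

lemma ennreal_lin3:
  assumes "0 \<le> a" "0 \<le> b" "0 \<le> c" "0 \<le> \<alpha>" "0 \<le> \<beta>" "0 \<le> \<gamma>"
  shows "ennreal (\<alpha> * a + \<beta> * b + \<gamma> * c) = ennreal \<alpha> * ennreal a + ennreal \<beta> * ennreal b + ennreal \<gamma> * ennreal c"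
  using assms by (simp add: ennreal_plus ennreal_mult)

theorem lemma2p4:
  fixes \<Omega> :: "'a::euclidean_space set"
    and s \<Lambda> p q :: real
    and G g :: "real \<Rightarrow> real"
    and k :: "'a \<times> 'a \<Rightarrow> ennreal"
    and u v :: "'a \<Rightarrow> real"
  assumes "0 < s" "s < 1" "1 \<le> \<Lambda>"
    and "young_pq G g p q"
    and "k \<in> borel_measurable (lebesgue :: ('a \<times> 'a) measure)"
    and "AE z in (lebesgue :: ('a \<times> 'a) measure).
           ennreal (1 / \<Lambda>) \<le> k z \<and> k z = k (snd z, fst z) \<and> k z \<le> ennreal \<Lambda>"
    and "open \<Omega>"
    and "u \<in> WsG_loc s G \<Omega>" "u \<in> Lgs s g"
    and "v \<in> WsG_loc s G \<Omega>"
    and "\<exists>K. compact K \<and> K \<subseteq> \<Omega> \<and> (\<forall>x. x \<notin> K \<longrightarrow> v x = 0)"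
  shows "integrable (lebesgue :: ('a \<times> 'a) measure)
           (\<lambda>z. g \<bar>Ds s u (fst z) (snd z)\<bar> * sgn (Ds s u (fst z) (snd z)) * Ds s v (fst z) (snd z)
                * enn2real (k z) / norm (fst z - snd z) ^ DIM('a))"
proof -
  note Y = assms(4)
  have s0: "0 < s" and \<Lambda>1: "1 \<le> \<Lambda>" using assms by auto
  have p1: "1 < p" and pq: "p \<le> q" using Y_p[OF Y] Y_pq[OF Y] .
  obtain K where K: "compact K" "K \<subseteq> \<Omega>" and vK: "\<And>x. x \<notin> K \<Longrightarrow> v x = 0"
    using assms(11) by blast
  have um: "u \<in> borel_measurable lebesgue" using assms(8) by (simp add: WsG_loc_def)
  have vm: "v \<in> borel_measurable lebesgue" using assms(10) by (simp add: WsG_loc_def)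
  define Du where "Du z = Ds s u (fst z) (snd z)" for z :: "'a \<times> 'a"
  define Dv where "Dv z = Ds s v (fst z) (snd z)" for z :: "'a \<times> 'a"
  define N where "N z = norm (fst z - snd z) ^ DIM('a)" for z :: "'a \<times> 'a"
  have Dum[measurable]: "Du \<in> borel_measurable lebesgue" unfolding Du_def by (rule Ds_meas[OF um])
  have Dvm[measurable]: "Dv \<in> borel_measurable lebesgue" unfolding Dv_def by (rule Ds_meas[OF vm])
  have Nm[measurable]: "N \<in> borel_measurable lebesgue" unfolding N_def by measurable
  have gDum[measurable]: "(\<lambda>z. g \<bar>Du z\<bar>) \<in> borel_measurable lebesgue" by (rule g_abs_meas[OF Y Dum])
  have GDum[measurable]: "(\<lambda>z. G \<bar>Du z\<bar>) \<in> borel_measurable lebesgue" by (rule G_abs_meas[OF Y Dum])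
  have GDvm[measurable]: "(\<lambda>z. G \<bar>Dv z\<bar>) \<in> borel_measurable lebesgue" by (rule G_abs_meas[OF Y Dvm])
  note km[measurable] = assms(5)
  define F where "F z = g \<bar>Du z\<bar> * sgn (Du z) * Dv z * enn2real (k z) / N z" for z
  have Fm: "F \<in> borel_measurable lebesgue" unfolding F_def by measurable
  have goal_eq: "(\<lambda>z. g \<bar>Ds s u (fst z) (snd z)\<bar> * sgn (Ds s u (fst z) (snd z)) * Ds s v (fst z) (snd z)
                * enn2real (k z) / norm (fst z - snd z) ^ DIM('a)) = F"
    by (simp add: F_def Du_def Dv_def N_def fun_eq_iff)
  show ?thesis
  proof (cases "K = {}")
    case True
    then have "F = (\<lambda>z. 0)" using vK by (auto simp: F_def Dv_def Ds_def fun_eq_iff)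
    then show ?thesis unfolding goal_eq by simp
  next
    case False
    obtain D \<delta> R where oD: "open D" and cD: "compact (closure D)" and sD: "closure D \<subseteq> \<Omega>"
      and KD: "K \<subseteq> D" and bD: "bounded D" and \<delta>: "0 < \<delta>" and R: "0 \<le> R"
      and RK: "\<And>x. x \<in> K \<Longrightarrow> norm x \<le> R"
      and far: "\<And>x y. x \<in> K \<Longrightarrow> y \<notin> D \<Longrightarrow> \<delta> \<le> dist x y"
      using geom_setup[OF K False assms(7)] by metis
    define c where "c = \<delta> / (\<delta> + 1 + R)"
    have c: "0 < c" using \<delta> R by (simp add: c_def)
    have cR: "c * (1 + norm y) \<le> dist x y" if "x \<in> K" "y \<notin> D" for x y
    proof -
      have r: "\<delta> \<le> dist x y" using far[OF that] .
      have "norm y \<le> norm x + dist x y" by (metis dist_norm norm_triangle_sub add.commute dist_commute)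
      then have ny: "1 + norm y \<le> 1 + R + dist x y" using RK[OF that(1)] by simp
      have "\<delta> * (1 + norm y) \<le> \<delta> * (1 + R + dist x y)" using ny \<delta> by (intro mult_left_mono) auto
      also have "\<dots> \<le> dist x y * (\<delta> + 1 + R)"
        using r R mult_right_mono[OF r, of "1 + R"] by (simp add: algebra_simps)
      finally have "\<delta> * (1 + norm y) \<le> dist x y * (\<delta> + 1 + R)" .
      then show ?thesis unfolding c_def using \<delta> R by (simp add: field_simps)
    qed
    have uD: "(\<integral>\<^sup>+ x\<in>D. ennreal (G \<bar>u x\<bar>) \<partial>lebesgue) < \<infinity>"
      "(\<integral>\<^sup>+ z\<in>D \<times> D. ennreal (G \<bar>Ds s u (fst z) (snd z)\<bar> / norm (fst z - snd z) ^ DIM('a))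
            \<partial>(lebesgue :: ('a \<times> 'a) measure)) < \<infinity>"
      using assms(8) oD cD sD unfolding WsG_loc_def by auto
    have vD: "(\<integral>\<^sup>+ x\<in>D. ennreal (G \<bar>v x\<bar>) \<partial>lebesgue) < \<infinity>"
      "(\<integral>\<^sup>+ z\<in>D \<times> D. ennreal (G \<bar>Ds s v (fst z) (snd z)\<bar> / norm (fst z - snd z) ^ DIM('a))
            \<partial>(lebesgue :: ('a \<times> 'a) measure)) < \<infinity>"
      using assms(10) oD cD sD unfolding WsG_loc_def by auto
    have tail: "(\<integral>\<^sup>+ x. ennreal (g (\<bar>u x\<bar> / (1 + norm x) powr s) * (1 + norm x) powr (- real DIM('a) - s))
        \<partial>lebesgue) < \<infinity>"
      using assms(9) unfolding Lgs_def by auto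
    define l1 where "l1 = max 1 (2 / \<delta> powr s)"
    define l2 where "l2 = max 1 (2 / c powr s)"
    define C1 where "C1 = (q / p) * l1 powr (q - 1)"
    define C2 where "C2 = (q / p) * l2 powr (q - 1)"
    define e where "e = - real DIM('a) - s"
    define Px where "Px x = indicator K x * (g (l1 * \<bar>u x\<bar>) * \<bar>v x\<bar> + C2 * \<bar>v x\<bar>)" for x
    define Py where "Py y = (1 + norm y) powr e + g (\<bar>u y\<bar> / (1 + norm y) powr s) * (1 + norm y) powr e" for y :: 'a
    define M where "M = \<Lambda> * c powr e"
    define B1 where "B1 z = indicator (D \<times> D) z * (\<Lambda> * q) * (G \<bar>Du z\<bar> / N z + G \<bar>Dv z\<bar> / N z)" for z
    have C10: "0 \<le> C1" and C20: "0 \<le> C2" using p1 pq by (auto simp: C1_def C2_def)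
    have M0: "0 \<le> M" using \<Lambda>1 by (simp add: M_def)
    have Px0: "0 \<le> Px x" for x unfolding Px_def using C20 Y_gnn[OF Y, of "l1 * \<bar>u x\<bar>"]
      by (auto simp: l1_def)
    have Py0: "0 \<le> Py y" for y unfolding Py_def using Y_gnn[OF Y, of "\<bar>u y\<bar> / (1 + norm y) powr s"]
      by auto
    have N0: "0 \<le> N z" for z by (simp add: N_def)
    have B10: "0 \<le> B1 z" for z unfolding B1_def using N0[of z] Y_Gnn[OF Y] p1 pq \<Lambda>1
      by (auto intro!: mult_nonneg_nonneg add_nonneg_nonneg divide_nonneg_nonneg)
    have OS: "g \<bar>Ds s u x y\<bar> * \<bar>Ds s v x y\<bar> / norm (x - y) ^ DIM('a) \<le> c powr e * (Px x * Py y)"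
      if "x \<in> K" "y \<notin> D" for x y
    proof -
      have "y \<notin> K" using that KD by auto
      then have vy: "v y = 0" by (rule vK)
      have "g \<bar>Ds s u x y\<bar> * \<bar>Ds s v x y\<bar> / norm (x - y) ^ DIM('a)
        \<le> c powr (- real DIM('a) - s) *
        ((g (l1 * \<bar>u x\<bar>) * \<bar>v x\<bar> + (q / p) * l2 powr (q - 1) * \<bar>v x\<bar>) *
         ((1 + norm y) powr (- real DIM('a) - s)
          + g (\<bar>u y\<bar> / (1 + norm y) powr s) * (1 + norm y) powr (- real DIM('a) - s)))"
        by (rule one_sided[OF Y s0 \<delta> c far[OF that] cR[OF that]])
           (auto simp: l1_def l2_def vy)
      also have "\<dots> = c powr e * (Px x * Py y)"
        using that by (simp add: Px_def Py_def C2_def e_def)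
      finally show ?thesis .
    qed
    have A: "g \<bar>Du z\<bar> * \<bar>Dv z\<bar> / N z \<le> q * (G \<bar>Du z\<bar> / N z + G \<bar>Dv z\<bar> / N z) * indicator (D \<times> D) z
        + c powr e * (Px (fst z) * Py (snd z)) + c powr e * (Px (snd z) * Py (fst z))" for z
    proof -
      obtain x y where z: "z = (x, y)" by (cases z)
      have t1: "0 \<le> q * (G \<bar>Du z\<bar> / N z + G \<bar>Dv z\<bar> / N z) * indicator (D \<times> D) z"
        using N0[of z] Y_Gnn[OF Y] p1 pq
        by (auto intro!: mult_nonneg_nonneg add_nonneg_nonneg divide_nonneg_nonneg)
      have t2: "0 \<le> c powr e * (Px a * Py b)" for a b using Px0 Py0 by simp
      show ?thesis
      proof (cases "x \<in> D \<and> y \<in> D")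
        case True
        have "g \<bar>Du z\<bar> * \<bar>Dv z\<bar> \<le> q * (G \<bar>Du z\<bar> + G \<bar>Dv z\<bar>)" by (rule Y_young[OF Y]) auto
        then have "g \<bar>Du z\<bar> * \<bar>Dv z\<bar> / N z \<le> q * (G \<bar>Du z\<bar> + G \<bar>Dv z\<bar>) / N z"
          using N0[of z] by (rule divide_right_mono)
        also have "\<dots> = q * (G \<bar>Du z\<bar> / N z + G \<bar>Dv z\<bar> / N z) * indicator (D \<times> D) z"
          using True z by (simp add: add_divide_distrib[symmetric])
        finally show ?thesis using t2[of "fst z" "snd z"] t2[of "snd z" "fst z"] by linarith
      next
        case nD: False
        show ?thesis
        proof (cases "x \<in> K")
          case True
          then have "y \<notin> D" using nD KD by auto
          then have "g \<bar>Du z\<bar> * \<bar>Dv z\<bar> / N z \<le> c powr e * (Px x * Py y)"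
            using OS[OF True] by (simp add: z Du_def Dv_def N_def)
          then show ?thesis using t1 t2[of y x] z by simp
        next
          case xK: False
          show ?thesis
          proof (cases "y \<in> K")
            case True
            then have "x \<notin> D" using nD KD by auto
            have sw: "\<bar>Ds s w x y\<bar> = \<bar>Ds s w y x\<bar>" for w
              by (simp add: Ds_def norm_minus_commute abs_minus_commute)
            have "g \<bar>Du z\<bar> * \<bar>Dv z\<bar> / N z = g \<bar>Ds s u y x\<bar> * \<bar>Ds s v y x\<bar> / norm (y - x) ^ DIM('a)"
              by (simp add: z Du_def Dv_def N_def sw norm_minus_commute)
            also have "\<dots> \<le> c powr e * (Px y * Py x)" using OS[OF True \<open>x \<notin> D\<close>] .
            finally show ?thesis using t1 t2[of x y] z by simp
          next
            case False
            then have "Dv z = 0" using xK vK by (simp add: z Dv_def Ds_def)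
            then show ?thesis using t1 t2[of "fst z" "snd z"] t2[of "snd z" "fst z"] by simp
          qed
        qed
      qed
    qed
    have Kb: "K \<in> sets lebesgue" using K(1) by (simp add: compact_imp_closed borel_closed)
    have Db: "D \<in> sets lebesgue" using oD by simp
    have Pxm: "Px \<in> borel_measurable lebesgue"
    proof -
      have l10: "0 < l1" by (simp add: l1_def)
      have "(\<lambda>x. g \<bar>l1 * u x\<bar>) \<in> borel_measurable lebesgue" by (rule g_abs_meas[OF Y]) (use um in measurable)
      moreover have "(\<lambda>x. g \<bar>l1 * u x\<bar>) = (\<lambda>x. g (l1 * \<bar>u x\<bar>))" using l10 by (simp add: abs_mult)
      ultimately have [measurable]: "(\<lambda>x. g (l1 * \<bar>u x\<bar>)) \<in> borel_measurable lebesgue" by simp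
      note [measurable] = um vm
      show ?thesis unfolding Px_def using Kb by measurable
    qed
    have Pym: "Py \<in> borel_measurable lebesgue"
    proof -
      have "(\<lambda>y. g \<bar>u y / (1 + norm y) powr s\<bar>) \<in> borel_measurable lebesgue" by (rule g_abs_meas[OF Y]) (use um in measurable)
      moreover have "(\<lambda>y. g \<bar>u y / (1 + norm y) powr s\<bar>) = (\<lambda>y. g (\<bar>u y\<bar> / (1 + norm y) powr s))"
        by (simp add: abs_divide fun_eq_iff)
      ultimately have [measurable]: "(\<lambda>y. g (\<bar>u y\<bar> / (1 + norm y) powr s)) \<in> borel_measurable lebesgue" by simp
      show ?thesis unfolding Py_def by measurable
    qed
    have g1: "0 < g 1" by (rule Y_g1[OF Y])
    have DM: "emeasure lebesgue D < \<infinity>"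
      using emeasure_bounded_finite[OF bD] oD by simp
    have IPx: "(\<integral>\<^sup>+ x. ennreal (Px x) \<partial>lebesgue) < \<infinity>"
    proof -
      define a1 where "a1 = C1 * q"
      define a2 where "a2 = C1 * q + C2 * q / g 1"
      define a3 where "a3 = C2 * q / g 1"
      have a0: "0 \<le> a1" "0 \<le> a2" "0 \<le> a3" using C10 C20 p1 pq g1 by (auto simp: a1_def a2_def a3_def)
      have pb: "Px x \<le> a1 * (G \<bar>u x\<bar> * indicator D x) + a2 * (G \<bar>v x\<bar> * indicator D x) + a3 * indicator D x" for x
      proof (cases "x \<in> K")
        case True
        then have xD: "x \<in> D" using KD by auto
        have "g (l1 * \<bar>u x\<bar>) \<le> C1 * g \<bar>u x\<bar>" unfolding C1_def by (rule Y_gdouble[OF Y]) (auto simp: l1_def)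
        then have "g (l1 * \<bar>u x\<bar>) * \<bar>v x\<bar> \<le> C1 * g \<bar>u x\<bar> * \<bar>v x\<bar>" by (rule mult_right_mono) simp
        also have "\<dots> = C1 * (g \<bar>u x\<bar> * \<bar>v x\<bar>)" by simp
        also have "\<dots> \<le> C1 * (q * (G \<bar>u x\<bar> + G \<bar>v x\<bar>))" using C10 by (intro mult_left_mono Y_young[OF Y]) auto
        finally have i1: "g (l1 * \<bar>u x\<bar>) * \<bar>v x\<bar> \<le> C1 * (q * (G \<bar>u x\<bar> + G \<bar>v x\<bar>))" .
        have "\<bar>v x\<bar> \<le> q * (1 + G \<bar>v x\<bar>) / g 1" by (rule Y_lin[OF Y]) simp
        then have i2: "C2 * \<bar>v x\<bar> \<le> C2 * (q * (1 + G \<bar>v x\<bar>) / g 1)" using C20 by (rule mult_left_mono)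
        have "Px x = g (l1 * \<bar>u x\<bar>) * \<bar>v x\<bar> + C2 * \<bar>v x\<bar>" using True by (simp add: Px_def)
        also have "\<dots> \<le> C1 * (q * (G \<bar>u x\<bar> + G \<bar>v x\<bar>)) + C2 * (q * (1 + G \<bar>v x\<bar>) / g 1)" using i1 i2 by linarith
        also have "\<dots> = a1 * (G \<bar>u x\<bar> * indicator D x) + a2 * (G \<bar>v x\<bar> * indicator D x) + a3 * indicator D x"
          using xD g1 by (simp add: a1_def a2_def a3_def field_simps)
        finally show ?thesis .
      next
        case False
        then have "Px x = 0" by (simp add: Px_def)
        then show ?thesis using a0 Y_Gnn[OF Y] by (auto intro!: add_nonneg_nonneg mult_nonneg_nonneg)
      qed
      have "(\<integral>\<^sup>+ x. ennreal (Px x) \<partial>lebesgue) \<le>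
          (\<integral>\<^sup>+ x. ennreal a1 * (ennreal (G \<bar>u x\<bar>) * indicator D x) + ennreal a2 * (ennreal (G \<bar>v x\<bar>) * indicator D x)
              + ennreal a3 * indicator D x \<partial>lebesgue)"
      proof (rule nn_integral_mono)
        fix x
        have "ennreal (Px x) \<le> ennreal (a1 * (G \<bar>u x\<bar> * indicator D x) + a2 * (G \<bar>v x\<bar> * indicator D x) + a3 * indicator D x)"
          by (rule ennreal_leI[OF pb])
        also have "\<dots> = ennreal a1 * ennreal (G \<bar>u x\<bar> * indicator D x) + ennreal a2 * ennreal (G \<bar>v x\<bar> * indicator D x)
              + ennreal a3 * ennreal (indicator D x)"
          using a0 Y_Gnn[OF Y] by (intro ennreal_lin3) auto
        also have "\<dots> = ennreal a1 * (ennreal (G \<bar>u x\<bar>) * indicator D x) + ennreal a2 * (ennreal (G \<bar>v x\<bar>) * indicator D x)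
              + ennreal a3 * indicator D x"
          by (simp add: indicator_def)
        finally show "ennreal (Px x) \<le> \<dots>" .
      qed
      also have "\<dots> = ennreal a1 * (\<integral>\<^sup>+ x\<in>D. ennreal (G \<bar>u x\<bar>) \<partial>lebesgue) + ennreal a2 * (\<integral>\<^sup>+ x\<in>D. ennreal (G \<bar>v x\<bar>) \<partial>lebesgue)
              + ennreal a3 * emeasure lebesgue D"
      proof -
        have [measurable]: "(\<lambda>x. G \<bar>u x\<bar>) \<in> borel_measurable lebesgue" by (rule G_abs_meas[OF Y um])
        have [measurable]: "(\<lambda>x. G \<bar>v x\<bar>) \<in> borel_measurable lebesgue" by (rule G_abs_meas[OF Y vm])
        show ?thesis using Db
          by (simp add: nn_integral_add nn_integral_cmult nn_integral_cmult_indicator)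
      qed
      also have "\<dots> < \<infinity>" using uD(1) vD(1) DM
        by (simp add: ennreal_mult_less_top)
      finally show ?thesis .
    qed
    have IPy: "(\<integral>\<^sup>+ y. ennreal (Py y) \<partial>lebesgue) < \<infinity>"
    proof -
      have [measurable]: "(\<lambda>y. g (\<bar>u y\<bar> / (1 + norm y) powr s)) \<in> borel_measurable lebesgue"
      proof -
        have "(\<lambda>y. g \<bar>u y / (1 + norm y) powr s\<bar>) \<in> borel_measurable lebesgue" by (rule g_abs_meas[OF Y]) (use um in measurable)
        moreover have "(\<lambda>y. g \<bar>u y / (1 + norm y) powr s\<bar>) = (\<lambda>y. g (\<bar>u y\<bar> / (1 + norm y) powr s))"
          by (simp add: abs_divide fun_eq_iff)
        ultimately show ?thesis by simp
      qed
      have "(\<integral>\<^sup>+ y. ennreal (Py y) \<partial>lebesgue) = (\<integral>\<^sup>+ y. ennreal ((1 + norm y) powr e)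
           + ennreal (g (\<bar>u y\<bar> / (1 + norm y) powr s) * (1 + norm y) powr e) \<partial>lebesgue)"
        unfolding Py_def using Y_gnn[OF Y]
        by (intro nn_integral_cong ennreal_plus) auto
      also have "\<dots> = (\<integral>\<^sup>+ y. ennreal ((1 + norm y) powr e) \<partial>(lebesgue :: 'a measure))
          + (\<integral>\<^sup>+ y. ennreal (g (\<bar>u y\<bar> / (1 + norm y) powr s) * (1 + norm y) powr e) \<partial>lebesgue)"
      proof -
        have m1: "(\<lambda>y::'a. ennreal ((1 + norm y) powr e)) \<in> borel_measurable lebesgue" by measurable
        have m2: "(\<lambda>y::'a. ennreal (g (\<bar>u y\<bar> / (1 + norm y) powr s) * (1 + norm y) powr e)) \<in> borel_measurable lebesgue"
          by measurable
        show ?thesis by (rule nn_integral_add[OF m1 m2])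
      qed
      also have "\<dots> < \<infinity>" using tail_weight_finite[OF s0, where 'a='a] tail unfolding e_def by simp
      finally show ?thesis .
    qed
    define E1 where "E1 z = ennreal (\<Lambda> * q) * (ennreal (G \<bar>Du z\<bar> / N z) * indicator (D \<times> D) z
       + ennreal (G \<bar>Dv z\<bar> / N z) * indicator (D \<times> D) z)" for z
    define E2 where "E2 z = ennreal M * (ennreal (Px (fst z)) * ennreal (Py (snd z)))" for z :: "'a \<times> 'a"
    define E3 where "E3 z = ennreal M * (ennreal (Py (fst z)) * ennreal (Px (snd z)))" for z :: "'a \<times> 'a"
    have kb: "AE z in (lebesgue :: ('a \<times> 'a) measure). enn2real (k z) \<le> \<Lambda>"
      using assms(6)
    proof eventually_elim
      case (elim z)
      then have "enn2real (k z) \<le> enn2real (ennreal \<Lambda>)" by (intro enn2real_mono) auto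
      then show ?case using \<Lambda>1 by simp
    qed
    have bound: "AE z in (lebesgue :: ('a \<times> 'a) measure). ennreal (norm (F z)) \<le> E1 z + E2 z + E3 z"
      using kb
    proof eventually_elim
      case (elim z)
      define a where "a = g \<bar>Du z\<bar> * \<bar>Dv z\<bar> / N z"
      have a0: "0 \<le> a" unfolding a_def using Y_gnn[OF Y] N0[of z] by auto
      have k0: "0 \<le> enn2real (k z)" by simp
      have "\<bar>F z\<bar> = a * (\<bar>sgn (Du z)\<bar> * enn2real (k z))"
        unfolding F_def a_def using Y_gnn[OF Y, of "\<bar>Du z\<bar>"] N0[of z]
        by (simp add: abs_mult abs_divide)
      also have "\<dots> \<le> a * \<Lambda>"
      proof (rule mult_left_mono[OF _ a0])
        have "\<bar>sgn (Du z)\<bar> \<le> 1" by (simp add: abs_sgn_eq)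
        then show "\<bar>sgn (Du z)\<bar> * enn2real (k z) \<le> \<Lambda>"
          using elim k0 \<Lambda>1 mult_mono[of "\<bar>sgn (Du z)\<bar>" 1 "enn2real (k z)" \<Lambda>] by simp
      qed
      also have "\<dots> \<le> \<Lambda> * (q * (G \<bar>Du z\<bar> / N z + G \<bar>Dv z\<bar> / N z) * indicator (D \<times> D) z)
          + M * (Px (fst z) * Py (snd z)) + M * (Px (snd z) * Py (fst z))"
        using mult_left_mono[OF A[of z], of \<Lambda>] \<Lambda>1 unfolding a_def M_def
        by (simp add: algebra_simps)
      finally have re: "norm (F z) \<le> \<Lambda> * (q * (G \<bar>Du z\<bar> / N z + G \<bar>Dv z\<bar> / N z) * indicator (D \<times> D) z)
          + M * (Px (fst z) * Py (snd z)) + M * (Px (snd z) * Py (fst z))" by simp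
      have nn: "0 \<le> G \<bar>Du z\<bar> / N z" "0 \<le> G \<bar>Dv z\<bar> / N z" using Y_Gnn[OF Y] N0[of z] by auto
      have "ennreal (\<Lambda> * (q * (G \<bar>Du z\<bar> / N z + G \<bar>Dv z\<bar> / N z) * indicator (D \<times> D) z)
          + M * (Px (fst z) * Py (snd z)) + M * (Px (snd z) * Py (fst z))) = E1 z + E2 z + E3 z"
      proof -
        define X where "X = \<Lambda> * (q * (G \<bar>Du z\<bar> / N z + G \<bar>Dv z\<bar> / N z) * indicator (D \<times> D) z)"
        define Y2 where "Y2 = M * (Px (fst z) * Py (snd z))"
        define Z where "Z = M * (Px (snd z) * Py (fst z))"
        have X0: "0 \<le> X" unfolding X_def using nn \<Lambda>1 p1 pq by simp
        have Y0: "0 \<le> Y2" "0 \<le> Z" unfolding Y2_def Z_def using M0 Px0 Py0 by simp_all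
        have eq0: "X = (\<Lambda> * q) * (G \<bar>Du z\<bar> / N z * indicator (D \<times> D) z + G \<bar>Dv z\<bar> / N z * indicator (D \<times> D) z)"
          unfolding X_def by (simp add: algebra_simps)
        have e1: "ennreal X = E1 z"
          unfolding eq0 E1_def using nn \<Lambda>1 p1 pq
          by (simp add: ennreal_mult ennreal_plus indicator_def)
        have e2: "ennreal Y2 = E2 z"
          unfolding E2_def Y2_def using M0 Px0 Py0 by (simp add: ennreal_mult)
        have e3: "ennreal Z = E3 z"
          unfolding E3_def Z_def using M0 Px0 Py0 by (simp add: ennreal_mult mult.commute)
        have "ennreal (X + Y2 + Z) = ennreal (X + Y2) + ennreal Z" using X0 Y0 by (intro ennreal_plus) auto
        also have "ennreal (X + Y2) = ennreal X + ennreal Y2" using X0 Y0 by (intro ennreal_plus) auto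
        finally show ?thesis unfolding X_def[symmetric] Y2_def[symmetric] Z_def[symmetric] e1 e2 e3 .
      qed
      then show ?case using ennreal_leI[OF re] by simp
    qed
    have Pxm'[measurable]: "(\<lambda>x. ennreal (Px x)) \<in> borel_measurable lebesgue" using Pxm by measurable
    have Pym'[measurable]: "(\<lambda>x. ennreal (Py x)) \<in> borel_measurable lebesgue" using Pym by measurable
    have E1m[measurable]: "E1 \<in> borel_measurable lebesgue"
    proof -
      have "D \<times> D \<in> sets (lebesgue :: ('a \<times> 'a) measure)" using oD by (simp add: open_Times)
      then show ?thesis unfolding E1_def by measurable
    qed
    have [measurable]: "(\<lambda>z. Px (fst z)) \<in> borel_measurable (lebesgue :: ('a \<times> 'a) measure)" by (rule meas_fst[OF Pxm])
    have [measurable]: "(\<lambda>z. Px (snd z)) \<in> borel_measurable (lebesgue :: ('a \<times> 'a) measure)" by (rule meas_snd[OF Pxm])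
    have [measurable]: "(\<lambda>z. Py (fst z)) \<in> borel_measurable (lebesgue :: ('a \<times> 'a) measure)" by (rule meas_fst[OF Pym])
    have [measurable]: "(\<lambda>z. Py (snd z)) \<in> borel_measurable (lebesgue :: ('a \<times> 'a) measure)" by (rule meas_snd[OF Pym])
    have E2m[measurable]: "E2 \<in> borel_measurable lebesgue" unfolding E2_def by measurable
    have E3m[measurable]: "E3 \<in> borel_measurable lebesgue" unfolding E3_def by measurable
    have "(\<integral>\<^sup>+ z. ennreal (norm (F z)) \<partial>lebesgue) \<le> (\<integral>\<^sup>+ z. E1 z + E2 z + E3 z \<partial>lebesgue)"
      by (rule nn_integral_mono_AE[OF bound])
    also have "\<dots> = (\<integral>\<^sup>+ z. E1 z \<partial>lebesgue) + (\<integral>\<^sup>+ z. E2 z \<partial>lebesgue) + (\<integral>\<^sup>+ z. E3 z \<partial>lebesgue)"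
      by (simp add: nn_integral_add)
    also have "\<dots> < \<infinity>"
    proof -
      have GDvm'[measurable]: "(\<lambda>z. ennreal (G \<bar>Dv z\<bar> / N z)) \<in> borel_measurable lebesgue" by measurable
      have GDum'[measurable]: "(\<lambda>z. ennreal (G \<bar>Du z\<bar> / N z)) \<in> borel_measurable lebesgue" by measurable
      have DD: "D \<times> D \<in> sets (lebesgue :: ('a \<times> 'a) measure)" using oD by (simp add: open_Times)
      have "(\<integral>\<^sup>+ z. E1 z \<partial>lebesgue) = ennreal (\<Lambda> * q) *
          ((\<integral>\<^sup>+ z\<in>D \<times> D. ennreal (G \<bar>Du z\<bar> / N z) \<partial>lebesgue) + (\<integral>\<^sup>+ z\<in>D \<times> D. ennreal (G \<bar>Dv z\<bar> / N z) \<partial>lebesgue))"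
        unfolding E1_def using DD by (simp add: nn_integral_add nn_integral_cmult)
      also have "\<dots> < \<infinity>" using uD(2) vD(2) unfolding Du_def Dv_def N_def
        by (simp add: ennreal_mult_less_top)
      finally have i1: "(\<integral>\<^sup>+ z. E1 z \<partial>lebesgue) < \<infinity>" .
      have "(\<integral>\<^sup>+ z. E2 z \<partial>lebesgue) = ennreal M * ((\<integral>\<^sup>+ x. ennreal (Px x) \<partial>lebesgue) * (\<integral>\<^sup>+ y. ennreal (Py y) \<partial>lebesgue))"
        unfolding E2_def
        by (simp add: nn_integral_cmult nn_integral_prod_lebesgue[OF Pxm' Pym'])
      also have "\<dots> < \<infinity>" using IPx IPy by (simp add: ennreal_mult_less_top)
      finally have i2: "(\<integral>\<^sup>+ z. E2 z \<partial>lebesgue) < \<infinity>" .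
      have "(\<integral>\<^sup>+ z. E3 z \<partial>lebesgue) = ennreal M * ((\<integral>\<^sup>+ x. ennreal (Py x) \<partial>lebesgue) * (\<integral>\<^sup>+ y. ennreal (Px y) \<partial>lebesgue))"
        unfolding E3_def
        by (simp add: nn_integral_cmult nn_integral_prod_lebesgue[OF Pym' Pxm'])
      also have "\<dots> < \<infinity>" using IPx IPy by (simp add: ennreal_mult_less_top)
      finally have i3: "(\<integral>\<^sup>+ z. E3 z \<partial>lebesgue) < \<infinity>" .
      show ?thesis using i1 i2 i3 by simp
    qed
    finally have fin: "(\<integral>\<^sup>+ z. ennreal (norm (F z)) \<partial>lebesgue) < \<infinity>" .
    show ?thesis unfolding goal_eq by (rule integrableI_bounded[OF Fm fin])



  qed
qed

end
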